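(* In the conditional setting described in the context, fix $\mathbf x\in\mathcal X$ and assume A1$''$, A2 and A3. If there exists $k^\star\in\{1,\dots,K\}$ with $\inf_{\mathbf w\in\mathcal W^*}w_{k^\star}>\frac12$, then $\liminf_{n\to\infty}\Pr\big(Y_{\mathbf x}\in\mathcal C_{\mathrm{comb}}(\mathbf x;\mathcal D_n)\big)\ge1-\alpha$.
   Context: Conditional setting: fix $K\ge2$ and $\alpha\in(0,1)$. For each $n$, on a common probability space there is a random data set $\mathcal D_n$. For each $k\in\{1,\dots,K\}$ and each $\mathbf x\in\mathcal X\subseteq\mathbb R^p$, $\mathcal C_k(\mathbf x;\mathcal D_n)\subseteq\mathbb R$ is a prediction set determined by $\mathcal D_n$ and $\mathbf x$. For a fixed test covariate value $\mathbf x$, $Y_{\mathbf x}$ denotes a real random variable distributed as the conditional law of the response given covariate $\mathbf x$, independent of $\mathcal D_n$; conditioning on $\{\mathbf X=\mathbf x\}$ means evaluating at $\mathbf x$ with response $Y_{\mathbf x}$. The events $\{Y_{\mathbf x}\in\mathcal C_k(\mathbf x;\mathcal D_n)\}$ are assumed measurable. Let $\Delta^{K-1}=\{\mathbf w\in[0,1]^K:w_k\ge0,\sum_k w_k=1\}$, let $\widehat{\mathbf w}_n=(\widehat w_{n,1},\dots,\widehat w_{n,K})$ be a $\sigma(\mathcal D_n)$-measurable random vector in $\Delta^{K-1}$, and let $\mathcal W^*\subseteq\Delta^{K-1}$ be a nonempty closed convex set; $\|\cdot\|$ is the Euclidean norm. A1$''$: $\sup_{k\in\{1,\dots,K\}}\big|\Pr(Y_{\mathbf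 x}\notin\mathcal C_k(\mathbf x;\mathcal D_n)\mid\mathcal D_n)-\alpha\big|\to0$ in probability as $n\to\infty$. A2: $\inf_{\mathbf w\in\mathcal W^*}\|\widehat{\mathbf w}_n-\mathbf w\|\to0$ in probability as $n\to\infty$. A3: $\mathcal C_{\mathrm{comb}}(\mathbf x;\mathcal D_n):=\{y\in\mathbb R:\sum_{k=1}^K\widehat w_{n,k}\mathbf 1\{y\in\mathcal C_k(\mathbf x;\mathcal D_n)\}>1/2\}$. *)

theory Defs
  imports "HOL-Probability.Probability"
begin

text \<open>Probability prob_simplex over the finite index type 'k (indices 1..K, K = CARD('k)).\<close>
definition prob_simplex :: "(real ^ 'k::finite) set" where
  "prob_simplex = {w. (\<forall>k. 0 \<le> w $ k) \<and> (\<Sum>k\<in>UNIV. w $ k) = 1}"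

definition comb_set :: "(real ^ 'k::finite) \<Rightarrow> ('k \<Rightarrow> real set) \<Rightarrow> real set" where
  "comb_set w C = {y. (\<Sum>k\<in>UNIV. w $ k * indicator (C k) y) > 1/2}"

definition conv_prob_zero :: "'a measure \<Rightarrow> (nat \<Rightarrow> 'a \<Rightarrow> real) \<Rightarrow> bool" where
  "conv_prob_zero M X \<longleftrightarrow>
     (\<forall>\<epsilon>>0. (\<lambda>n. measure M {\<omega> \<in> space M. \<bar>X n \<omega>\<bar> > \<epsilon>}) \<longlonglongrightarrow> 0)"

end

theory Submission
  imports Defs
begin

theorem theorem4:
  fixes M :: "'a measure" and N :: "'d measure" and Py :: "real measure"
    and D :: "nat \<Rightarrow> 'a \<Rightarrow> 'd"
    and C :: "nat \<Rightarrow> 'k::finite \<Rightarrow> 'd \<Rightarrow> real set"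
    and w_hat :: "nat \<Rightarrow> 'd \<Rightarrow> real ^ 'k"
    and W_star :: "(real ^ 'k) set"
    and \<alpha> :: real
  assumes K2: "CARD('k) \<ge> 2"
    and alpha: "0 < \<alpha>" "\<alpha> < 1"
    and M: "prob_space M"
    and Py: "prob_space Py" "sets Py = sets borel"
    and D_meas: "\<And>n. D n \<in> M \<rightarrow>\<^sub>M N"
    and C_meas: "\<And>n k. {(d, y). y \<in> C n k d} \<in> sets (N \<Otimes>\<^sub>M borel)"
    and w_meas: "\<And>n. w_hat n \<in> borel_measurable N"
    and w_simplex: "\<And>n d. w_hat n d \<in> prob_simplex"
    and Wstar: "W_star \<subseteq> prob_simplex" "W_star \<noteq> {}" "closed W_star" "convex W_star"
    and A1: "conv_prob_zero M
               (\<lambda>n \<omega>. MAX k\<in>UNIV. \<bar>measure Py {y \<in> space Py. y \<notin> C n k (D n \<omega>)} - \<alpha>\<bar>)"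
    and A2: "conv_prob_zero M (\<lambda>n \<omega>. infdist (w_hat n (D n \<omega>)) W_star)"
    and kstar: "\<exists>k. (INF w\<in>W_star. w $ k) > 1/2"
  shows "liminf (\<lambda>n. ereal (measure (M \<Otimes>\<^sub>M Py)
            {(\<omega>, y) \<in> space M \<times> space Py.
               y \<in> comb_set (w_hat n (D n \<omega>)) (\<lambda>k. C n k (D n \<omega>))}))
         \<ge> ereal (1 - \<alpha>)"
proof -
  interpret M: prob_space M by (rule M)
  interpret P: prob_space Py by (rule Py(1))
  have spPy: "space Py = UNIV" using sets_eq_imp_space_eq[OF Py(2)] by simp
  obtain ks where ks: "(INF w\<in>W_star. w $ ks) > 1/2" using kstar by blast
  define c where "c = (INF w\<in>W_star. w $ ks)"
  have bdd: "bdd_below ((\<lambda>w. w $ ks) ` W_star)"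
    using Wstar(1) by (auto simp: prob_simplex_def bdd_below_def intro!: exI[of _ 0])
  have wc: "c \<le> w $ ks" if "w \<in> W_star" for w
    unfolding c_def using bdd that by (rule cINF_lower)
  define \<delta> where "\<delta> = c - 1/2"
  have dpos: "\<delta> > 0" using ks by (simp add: \<delta>_def c_def)
  have key_w: "v $ ks > 1/2" if "infdist v W_star < \<delta>" for v
  proof -
    have "infdist v W_star = (INF a\<in>W_star. dist v a)" using Wstar(2) by (rule infdist_notempty)
    with that have "(INF a\<in>W_star. dist v a) < \<delta>" by simp
    then obtain a where a: "a \<in> W_star" "dist v a < \<delta>"
      using Wstar(2) by (subst (asm) cINF_less_iff) (auto intro!: bdd_belowI[of _ 0])
    have "\<bar>(v - a) $ ks\<bar> \<le> norm (v - a)" using component_le_norm_cart[of "v - a" ks] by simp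
    then have "\<bar>v $ ks - a $ ks\<bar> < \<delta>" using a(2) by (simp add: dist_norm)
    then show ?thesis using wc[OF a(1)] by (simp add: \<delta>_def)
  qed
  have Dpair: "(\<lambda>x. (D n (fst x), snd x)) \<in> M \<Otimes>\<^sub>M Py \<rightarrow>\<^sub>M N \<Otimes>\<^sub>M borel" for n
  proof -
    have "snd \<in> M \<Otimes>\<^sub>M Py \<rightarrow>\<^sub>M borel"
      using measurable_snd[of M Py] by (simp add: measurable_cong_sets[OF refl Py(2)])
    then show ?thesis using D_meas[of n] by (intro measurable_Pair) auto
  qed
  have ind_meas: "(\<lambda>x. indicator (C n k (D n (fst x))) (snd x) :: real) \<in> borel_measurable (M \<Otimes>\<^sub>M Py)" for n k
  proof -
    have "(\<lambda>x. indicator {(d, y). y \<in> C n k d} ((\<lambda>x. (D n (fst x), snd x)) x) :: real) \<in> borel_measurable (M \<Otimes>\<^sub>M Py)"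
      by (rule measurable_comp[OF Dpair, unfolded comp_def]) (rule borel_measurable_indicator[OF C_meas])
    then show ?thesis by (simp add: indicator_def)
  qed
  define F where "F n x = (\<Sum>k\<in>UNIV. w_hat n (D n (fst x)) $ k * indicator (C n k (D n (fst x))) (snd x))" for n x
  have F_meas: "F n \<in> borel_measurable (M \<Otimes>\<^sub>M Py)" for n
  proof -
    have "(\<lambda>x. w_hat n (D n (fst x)) $ k) \<in> borel_measurable (M \<Otimes>\<^sub>M Py)" for k
    proof -
      have c1: "(\<lambda>x. w_hat n (D n (fst x))) \<in> borel_measurable (M \<Otimes>\<^sub>M Py)"
        by (rule measurable_compose[OF measurable_compose[OF measurable_fst D_meas] w_meas])
      have c2: "(\<lambda>v::real^'k. v $ k) \<in> borel_measurable borel"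
        by (intro borel_measurable_continuous_onI continuous_intros)
      show ?thesis by (rule measurable_compose[OF c1 c2])
    qed
    then show ?thesis unfolding F_def using ind_meas by (intro borel_measurable_sum borel_measurable_times) auto
  qed
  define S where "S n = {(\<omega>, y) \<in> space M \<times> space Py.
               y \<in> comb_set (w_hat n (D n \<omega>)) (\<lambda>k. C n k (D n \<omega>))}" for n
  have S_eq: "S n = {x \<in> space (M \<Otimes>\<^sub>M Py). 1/2 < F n x}" for n
    by (auto simp: S_def F_def comb_set_def space_pair_measure)
  have S_meas: "S n \<in> sets (M \<Otimes>\<^sub>M Py)" for n
    unfolding S_eq using F_meas[of n] by measurable
  define h where "h n \<omega> = measure Py (Pair \<omega> -` S n)" for n \<omega>
  have h_meas: "h n \<in> borel_measurable M" for n
  proof -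
    have "(\<lambda>x. emeasure Py (Pair x -` S n)) \<in> borel_measurable M"
      by (rule P.measurable_emeasure_Pair[OF S_meas])
    then show ?thesis unfolding h_def measure_def by measurable
  qed
  have h_int: "integrable M (h n)" for n
    by (rule M.integrable_const_bound[where B=1]) (auto simp: h_def h_meas)
  have meas_eq: "measure (M \<Otimes>\<^sub>M Py) (S n) = (\<integral>\<omega>. h n \<omega> \<partial>M)" for n
  proof -
    have "emeasure (M \<Otimes>\<^sub>M Py) (S n) = (\<integral>\<^sup>+x. emeasure Py (Pair x -` S n) \<partial>M)"
      by (rule P.emeasure_pair_measure_alt[OF S_meas])
    also have "\<dots> = (\<integral>\<^sup>+x. ennreal (h n x) \<partial>M)"
      by (simp add: h_def P.emeasure_eq_measure)
    also have "\<dots> = ennreal (\<integral>\<omega>. h n \<omega> \<partial>M)"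
      by (rule nn_integral_eq_integral[OF h_int]) (auto simp: h_def)
    finally show ?thesis by (simp add: measure_def integral_nonneg_AE h_def)
  qed
  have Qsets: "{(d, y). y \<in> C n k d} \<in> sets (N \<Otimes>\<^sub>M Py)" for n k
    using C_meas[of n k] sets_pair_measure_cong[OF refl Py(2), of N] by simp
  define g where "g n k d = measure Py {y \<in> space Py. y \<notin> C n k d}" for n k d
  have g_meas: "g n k \<in> borel_measurable N" for n k
  proof -
    define Q' where "Q' = space (N \<Otimes>\<^sub>M Py) - {(d, y). y \<in> C n k d}"
    have Q': "Q' \<in> sets (N \<Otimes>\<^sub>M Py)" unfolding Q'_def using Qsets[of n k] by auto
    have "(\<lambda>x. emeasure Py (Pair x -` Q')) \<in> borel_measurable N"
      by (rule P.measurable_emeasure_Pair[OF Q'])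
    then have "(\<lambda>x. enn2real (emeasure Py (Pair x -` Q'))) \<in> borel_measurable N"
      by measurable
    moreover have "\<And>x. x \<in> space N \<Longrightarrow> enn2real (emeasure Py (Pair x -` Q')) = g n k x"
      by (auto simp: g_def Q'_def measure_def space_pair_measure spPy intro!: arg_cong[where f="\<lambda>A. enn2real (emeasure Py A)"])
    ultimately show ?thesis by (rule measurable_cong[THEN iffD1, rotated])
  qed
  define X1 where "X1 n \<omega> = (MAX k\<in>UNIV. \<bar>measure Py {y \<in> space Py. y \<notin> C n k (D n \<omega>)} - \<alpha>\<bar>)" for n \<omega>
  have X1_meas: "X1 n \<in> borel_measurable M" for n
  proof -
    have "(\<lambda>\<omega>. g n k (D n \<omega>)) \<in> borel_measurable M" for k
      by (rule measurable_compose[OF D_meas g_meas])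
    then have "(\<lambda>\<omega>. Max ((\<lambda>k. \<bar>g n k (D n \<omega>) - \<alpha>\<bar>) ` UNIV)) \<in> borel_measurable M"
      by (intro borel_measurable_Max) auto
    then show ?thesis by (simp add: X1_def[abs_def] g_def)
  qed
  have X2_meas: "(\<lambda>\<omega>. infdist (w_hat n (D n \<omega>)) W_star) \<in> borel_measurable M" for n
  proof -
    have c1: "(\<lambda>x. w_hat n (D n x)) \<in> borel_measurable M"
      by (rule measurable_compose[OF D_meas w_meas])
    have c2: "(\<lambda>v::real^'k. infdist v W_star) \<in> borel_measurable borel"
      by (intro borel_measurable_continuous_onI continuous_intros)
    show ?thesis by (rule measurable_compose[OF c1 c2])
  qed
  define B1 where "B1 n e = {\<omega> \<in> space M. \<bar>X1 n \<omega>\<bar> > e}" for n e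
  define B2 where "B2 n = {\<omega> \<in> space M. \<bar>infdist (w_hat n (D n \<omega>)) W_star\<bar> > \<delta>/2}" for n
  have B1_sets: "B1 n e \<in> sets M" for n e
    unfolding B1_def using X1_meas[of n] by measurable
  have B2_sets: "B2 n \<in> sets M" for n
    unfolding B2_def using X2_meas[of n] by measurable
  have pw: "h n \<omega> \<ge> (1 - \<alpha> - e) - indicator (B1 n e) \<omega> - indicator (B2 n) \<omega>"
    if \<omega>: "\<omega> \<in> space M" and e: "e > 0" for n \<omega> e
  proof (cases "\<omega> \<in> B1 n e \<union> B2 n")
    case True
    have "(1 - \<alpha> - e) - indicator (B1 n e) \<omega> - indicator (B2 n) \<omega> \<le> (0::real)"
      using True alpha e by (auto simp: indicator_def)
    also have "0 \<le> h n \<omega>" by (simp add: h_def)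
    finally show ?thesis .
  next
    case False
    define d where "d = D n \<omega>"
    have "\<bar>X1 n \<omega>\<bar> \<le> e" using False \<omega> by (auto simp: B1_def)
    moreover have "\<bar>measure Py {y \<in> space Py. y \<notin> C n ks d} - \<alpha>\<bar> \<le> X1 n \<omega>"
      unfolding X1_def d_def by (rule Max_ge) auto
    ultimately have m1: "measure Py {y \<in> space Py. y \<notin> C n ks d} \<le> \<alpha> + e" by linarith
    have "infdist (w_hat n d) W_star \<le> \<delta>/2" using False \<omega> by (auto simp: B2_def d_def)
    then have w1: "w_hat n d $ ks > 1/2" using dpos by (intro key_w) linarith
    have dN: "d \<in> space N" using D_meas[of n] \<omega> by (auto simp: d_def measurable_def)
    have Cm: "Pair d -` {(d, y). y \<in> C n ks d} \<in> sets Py"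
      by (rule sets_Pair1[OF Qsets])
    have Ceq: "Pair d -` {(d, y). y \<in> C n ks d} = C n ks d" by auto
    have sub: "C n ks d \<subseteq> Pair \<omega> -` S n"
    proof
      fix y assume y: "y \<in> C n ks d"
      have nn: "\<And>k. 0 \<le> w_hat n d $ k" using w_simplex[of n d] by (simp add: prob_simplex_def)
      have "w_hat n d $ ks * indicator (C n ks d) y
            \<le> (\<Sum>k\<in>UNIV. w_hat n d $ k * indicator (C n k d) y)"
        by (rule member_le_sum) (auto simp: nn)
      with y w1 show "y \<in> Pair \<omega> -` S n"
        using \<omega> by (simp add: S_def comb_set_def d_def spPy)
    qed
    have Sm: "Pair \<omega> -` S n \<in> sets Py" by (rule sets_Pair1[OF S_meas])
    have "measure Py (C n ks d) = 1 - measure Py (space Py - C n ks d)"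
      using P.prob_compl[of "C n ks d"] Cm Ceq by simp
    also have "space Py - C n ks d = {y \<in> space Py. y \<notin> C n ks d}" by auto
    finally have "measure Py (C n ks d) \<ge> 1 - \<alpha> - e" using m1 by simp
    also have "measure Py (C n ks d) \<le> h n \<omega>"
      unfolding h_def by (rule P.finite_measure_mono[OF sub Sm])
    finally show ?thesis using False by simp
  qed
  have bound: "measure (M \<Otimes>\<^sub>M Py) (S n) \<ge> (1 - \<alpha> - e) - measure M (B1 n e) - measure M (B2 n)"
    if e: "e > 0" for n e
  proof -
    have "(\<integral>\<omega>. (1 - \<alpha> - e) - indicator (B1 n e) \<omega> - indicator (B2 n) \<omega> \<partial>M) \<le> (\<integral>\<omega>. h n \<omega> \<partial>M)"
      by (rule integral_mono[OF _ h_int pw[OF _ e]]) (auto intro!: Bochner_Integration.integrable_diff integrable_real_indicator B1_sets B2_sets simp: M.emeasure_eq_measure)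
    also have "(\<integral>\<omega>. (1 - \<alpha> - e) - indicator (B1 n e) \<omega> - indicator (B2 n) \<omega> \<partial>M)
        = (1 - \<alpha> - e) - measure M (B1 n e) - measure M (B2 n)"
      by (subst Bochner_Integration.integral_diff, (auto intro!: Bochner_Integration.integrable_diff integrable_real_indicator B1_sets B2_sets simp: M.emeasure_eq_measure)[2])+
         (simp add: B1_sets B2_sets M.prob_space)
    finally show ?thesis by (simp add: meas_eq)
  qed
  have lim: "ereal (1 - \<alpha>) \<le> liminf (\<lambda>n. ereal (measure (M \<Otimes>\<^sub>M Py) (S n)))"
  proof (subst le_Liminf_iff, intro allI impI)
    fix y assume y: "y < ereal (1 - \<alpha>)"
    show "eventually (\<lambda>n. y < ereal (measure (M \<Otimes>\<^sub>M Py) (S n))) sequentially"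
    proof (cases y)
      case (real r)
      define e where "e = (1 - \<alpha> - r) / 3"
      have e: "e > 0" using y real by (simp add: e_def)
      have "r = 1 - \<alpha> - 3 * e" unfolding e_def by (simp add: field_simps)
      have t1: "(\<lambda>n. measure M (B1 n e)) \<longlonglongrightarrow> 0"
        using A1 e unfolding conv_prob_zero_def B1_def X1_def by blast
      have t2: "(\<lambda>n. measure M (B2 n)) \<longlonglongrightarrow> 0"
        using A2 dpos unfolding conv_prob_zero_def B2_def by (auto dest!: spec[of _ "\<delta>/2"])
      have ev1: "eventually (\<lambda>n. measure M (B1 n e) < e) sequentially"
        using order_tendstoD(2)[OF t1 e] .
      have ev2: "eventually (\<lambda>n. measure M (B2 n) < e) sequentially"
        using order_tendstoD(2)[OF t2 e] .
      show ?thesis using ev1 ev2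
      proof eventually_elim
        case (elim n)
        have "r < measure (M \<Otimes>\<^sub>M Py) (S n)"
          using bound[OF e, of n] elim \<open>r = 1 - \<alpha> - 3 * e\<close> by linarith
        then show ?case using real by simp
      qed
    qed (use y in auto)
  qed
  then show ?thesis by (simp add: S_def)
qed

end
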